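(* Consider the asynchronous multi-channel network model described in the context, running Algorithm 1 with frame length $L$, and assume the maximum clock drift rate satisfies $\delta \le \frac{1}{7}$. Then for every frame $f$ of any node and every other node $u$, the number of frames of $u$ that overlap $f$ in real time is at most $3$.
   Context: Each node $u$ has a clock $C_u$ (a function of real time) such that for all real times $t$ and all $\Delta t \ge 0$, $(1-\delta)\Delta t \le C_u(t+\Delta t) - C_u(t) \le (1+\delta)\Delta t$, where $0 \le \delta < 1$ is the maximum drift rate; clocks of different nodes may have arbitrary offsets. In Algorithm 1, each node, from the moment it starts (at an arbitrary real time), partitions its local time into consecutive frames each of length $L$ as measured by its own clock (the $k$-th frame occupies the real-time interval during which its clock reads values in $[C^{0}+(k-1)L,\, C^{0}+kL)$, where $C^0$ is its clock value at start), and each frame into three consecutive slots of local length $L/3$. Frames are regarded as real-time intervals; two frames overlap if these intervals intersect. *)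

theory Defs
  imports Main "HOL.Real"
begin

text \<open>Clock of node u: C u :: real \<Rightarrow> real (local time as a function of real time).
  Node u starts at real time s u.\<close>

definition frame :: "('n \<Rightarrow> real \<Rightarrow> real) \<Rightarrow> ('n \<Rightarrow> real) \<Rightarrow> real \<Rightarrow> 'n \<Rightarrow> nat \<Rightarrow> real set" where
  "frame C s L u k =
     {t. s u \<le> t \<and> C u (s u) + (real k - 1) * L \<le> C u t \<and> C u t < C u (s u) + real k * L}"

definition drift_bounded :: "('n \<Rightarrow> real \<Rightarrow> real) \<Rightarrow> real \<Rightarrow> bool" where
  "drift_bounded C \<delta> \<longleftrightarrow>
     (\<forall>u t dt. dt \<ge> 0 \<longrightarrow>
        (1 - \<delta>) * dt \<le> C u (t + dt) - C u t \<and> C u (t + dt) - C u t \<le> (1 + \<delta>) * dt)"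

end

theory Submission
  imports Defs
begin

lemma key:
  assumes L: "L > 0" and d0: "0 \<le> \<delta>" and d1: "\<delta> \<le> 1/7"
    and db: "drift_bounded C \<delta>"
    and k: "frame C s L u k \<inter> frame C s L v j \<noteq> {}"
    and k': "frame C s L u k' \<inter> frame C s L v j \<noteq> {}"
  shows "k' \<le> k + 2"
proof (rule ccontr)
  assume nk: "\<not> k' \<le> k + 2"
  obtain t where t: "t \<in> frame C s L u k" "t \<in> frame C s L v j" using k by blast
  obtain t' where t': "t' \<in> frame C s L u k'" "t' \<in> frame C s L v j" using k' by blast
  have kk: "real k' - 1 \<ge> real k + 2" using nk by linarith
  have A: "C u t' - C u t > 2 * L"
  proof -
    have "C u t' \<ge> C u (s u) + (real k' - 1) * L" using t' by (simp add: frame_def)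
    moreover have "C u t < C u (s u) + real k * L" using t by (simp add: frame_def)
    moreover have "(real k' - 1) * L \<ge> (real k + 2) * L" using kk L by (simp add: mult_right_mono)
    ultimately show ?thesis by (simp add: algebra_simps)
  qed
  have pos: "t < t'"
  proof (rule ccontr)
    assume "\<not> t < t'"
    then have "C u (t' + (t - t')) - C u t' \<ge> (1 - \<delta>) * (t - t')"
      using db \<open>\<not> t < t'\<close> unfolding drift_bounded_def by (metis diff_ge_0_iff_ge not_less less_imp_le)
    moreover have "(1 - \<delta>) * (t - t') \<ge> 0" using d1 \<open>\<not> t < t'\<close> by simp
    ultimately show False using A L by simp
  qed
  define dt where "dt = t' - t"
  have dtp: "dt > 0" using pos dt_def by simp
  have B: "C u t' - C u t \<le> (1 + \<delta>) * dt"
    using db unfolding drift_bounded_def dt_def by (metis add.commute diff_add_cancel dtp dt_def less_le)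
  have C1: "C v t' - C v t \<ge> (1 - \<delta>) * dt"
    using db unfolding drift_bounded_def dt_def by (metis add.commute diff_add_cancel dtp dt_def less_le)
  have C2: "C v t' - C v t < L" using t t' by (simp add: frame_def algebra_simps)
  have "2 * ((1 - \<delta>) * dt) < (1 + \<delta>) * dt" using A B C1 C2 by linarith
  then have "(1 - 3 * \<delta>) * dt < 0" by (simp add: algebra_simps)
  moreover have "(1 - 3 * \<delta>) * dt \<ge> 0" using d1 dtp by simp
  ultimately show False by simp
qed

theorem mainTheorem1:
  fixes C :: "'n \<Rightarrow> real \<Rightarrow> real" and s :: "'n \<Rightarrow> real"
    and L \<delta> :: real and v u :: 'n and j :: nat
  assumes "L > 0"
    and "0 \<le> \<delta>" and "\<delta> < 1" and "\<delta> \<le> 1/7"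
    and "drift_bounded C \<delta>"
    and "j \<ge> 1"
    and "u \<noteq> v"
  shows "finite {k. k \<ge> 1 \<and> frame C s L u k \<inter> frame C s L v j \<noteq> {}}
       \<and> card {k. k \<ge> 1 \<and> frame C s L u k \<inter> frame C s L v j \<noteq> {}} \<le> 3"
proof (cases "{k. k \<ge> 1 \<and> frame C s L u k \<inter> frame C s L v j \<noteq> {}} = {}")
  case True then show ?thesis by (simp only: True) simp
next
  case False
  define S where "S = {k. k \<ge> 1 \<and> frame C s L u k \<inter> frame C s L v j \<noteq> {}}"
  obtain k0 where k0: "k0 \<in> S" using False S_def by blast
  have "S \<subseteq> {..k0+2}"
  proof
    fix x assume "x \<in> S"
    then show "x \<in> {..k0+2}" using k0 key[OF assms(1,2,4,5), of s u k0 v j x] by (simp add: S_def)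
  qed
  then have fin: "finite S" using finite_subset by blast
  define m where "m = Min S"
  have mS: "m \<in> S" using fin k0 m_def Min_in by blast
  have "S \<subseteq> {m..m+2}"
  proof
    fix x assume x: "x \<in> S"
    have "m \<le> x" using fin x m_def by simp
    moreover have "x \<le> m + 2" using key[OF assms(1,2,4,5), of s u m v j x] mS x by (simp add: S_def)
    ultimately show "x \<in> {m..m+2}" by simp
  qed
  then have "card S \<le> card {m..m+2}" by (intro card_mono) auto
  then have "card S \<le> 3" by simp
  with fin show ?thesis unfolding S_def by simp
qed

end
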